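(* The set of $s$-practical numbers has asymptotic density $0$.
   Context: $s(n)=\sigma(n)-n$ is the sum of proper divisors of $n$, and $S_s(n)=\sum_{d\mid n}s(d)$. A positive integer $n$ is $s$-practical if every positive integer $m\le S_s(n)$ equals $\sum_{d\in\mathcal{D}}s(d)$ for some set $\mathcal{D}$ of distinct positive divisors of $n$. *)

theory Defs
  imports "HOL-Analysis.Analysis"
begin

definition divisors_set :: "nat \<Rightarrow> nat set" where
  "divisors_set n = {d. d dvd n \<and> 0 < d}"

definition sigma_fn :: "nat \<Rightarrow> nat" where
  "sigma_fn n = (\<Sum>d\<in>divisors_set n. d)"

definition s_fn :: "nat \<Rightarrow> nat" where
  "s_fn n = sigma_fn n - n"

definition S_s :: "nat \<Rightarrow> nat" where
  "S_s n = (\<Sum>d\<in>divisors_set n. s_fn d)"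

definition s_practical :: "nat \<Rightarrow> bool" where
  "s_practical n \<longleftrightarrow> 0 < n \<and>
     (\<forall>m. 0 < m \<and> m \<le> S_s n \<longrightarrow>
        (\<exists>D. D \<subseteq> divisors_set n \<and> m = (\<Sum>d\<in>D. s_fn d)))"

end

theory Submission
  imports Defs "HOL-Computational_Algebra.Primes" "HOL-Real_Asymp.Real_Asymp"
begin


lemma card_multiples:
  assumes "d > 0"
  shows "card {k\<in>{1..n::nat}. d dvd k} = n div d"
proof -
  have "{k\<in>{1..n::nat}. d dvd k} = (\<lambda>j. d*j) ` {1..n div d}"
  proof (intro set_eqI iffI)
    fix k assume k: "k \<in> {k\<in>{1..n::nat}. d dvd k}"
    then have "1 \<le> k" "k \<le> n" "d dvd k" by auto
    then obtain j where j: "k = d*j" by (auto elim: dvdE)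
    then have "1 \<le> j" using \<open>1 \<le> k\<close> by (cases "j = 0") auto
    moreover have "j \<le> n div d"
    proof -
      have "j = k div d" using j assms by simp
      then show ?thesis using \<open>k \<le> n\<close> by (simp add: div_le_mono)
    qed
    ultimately show "k \<in> (\<lambda>j. d*j) ` {1..n div d}" using j by auto
  next
    fix k assume "k \<in> (\<lambda>j. d*j) ` {1..n div d}"
    then obtain j where j0: "j \<in> {1..n div d}" and j1: "k = d*j" by (rule imageE)
    then have j: "k = d*j" "1 \<le> j" "j \<le> n div d" by auto
    have "d * j \<le> d * (n div d)" using j(3) by simp
    also have "\<dots> \<le> n" by (rule times_div_less_eq_dividend)
    finally have "d * j \<le> n" .
    moreover have "1 \<le> d*j" using j assms by simp
    ultimately show "k \<in> {k\<in>{1..n::nat}. d dvd k}" using j by auto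
  qed
  moreover have "inj_on (\<lambda>j. d*j) {1..n div d}" using assms by (auto simp: inj_on_def)
  ultimately show ?thesis by (simp add: card_image)
qed

lemma card_multiples_le:
  assumes "d > 0"
  shows "real (card {k\<in>{1..n::nat}. d dvd k}) \<le> real n / real d"
proof -
  have "n div d * d \<le> n" by simp
  then have "real (n div d) * real d \<le> real n" by (simp only: of_nat_mult[symmetric] of_nat_le_iff)
  then have "real (n div d) \<le> real n / real d" using assms by (simp add: field_simps)
  then show ?thesis using card_multiples[OF assms] by simp
qed


lemma primes_prod_dvd:
  assumes "finite S" "\<forall>p\<in>S. prime p \<and> p dvd (n::nat)"
  shows "\<Prod>S dvd n"
  using assms
proof (induction S rule: finite_induct)
  case empty then show ?case by simp
next
  case (insert p S)
  have "\<not> p dvd \<Prod>S"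
  proof
    assume "p dvd \<Prod>S"
    then have "\<exists>q\<in>S. p dvd q" using insert prime_dvd_prod_iff[of S p id] by simp
    then obtain q where q: "q \<in> S" "p dvd q" by blast
    have "prime p" "prime q" using insert q by auto
    then have "p = q" using q(2) primes_dvd_imp_eq by blast
    then show False using insert q by auto
  qed
  then have "coprime p (\<Prod>S)" using insert prime_imp_coprime by auto
  moreover have "\<Prod>S dvd n" "p dvd n" using insert by auto
  ultimately have "p * \<Prod>S dvd n" by (simp add: divides_mult)
  then show ?case using insert by simp
qed

definition prm :: "nat \<Rightarrow> nat" where "prm n = \<Prod>{p\<in>{..n}. prime p}"

lemma binom_mid_le: "(2*m+1) choose m \<le> 4^m"
proof -
  have "((2*m+1) choose m) + ((2*m+1) choose (m+1)) \<le> (\<Sum>k\<le>2*m+1. (2*m+1) choose k)"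
  proof -
    have "{m, m+1} \<subseteq> {..2*m+1}" by auto
    then have "(\<Sum>k\<in>{m,m+1}. (2*m+1) choose k) \<le> (\<Sum>k\<le>2*m+1. (2*m+1) choose k)"
      by (intro sum_mono2) auto
    then show ?thesis by simp
  qed
  also have "\<dots> = 2^(2*m+1)" by (rule choose_row_sum)
  finally have "((2*m+1) choose m) + ((2*m+1) choose (m+1)) \<le> 2^(2*m+1)" .
  moreover have "(2*m+1) choose (m+1) = (2*m+1) choose m"
    using binomial_symmetric[of m "2*m+1"] by simp
  moreover have "(2::nat)^(2*m+1) = 2 * 4^m" by (simp add: power_mult)
  ultimately show ?thesis by simp
qed

lemma prime_dvd_binom_mid:
  assumes "prime p" "m+1 < p" "p \<le> 2*m+1"
  shows "p dvd ((2*m+1) choose m)"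
proof -
  have e: "2*m+1-m = m+1" by simp
  have "fact m * fact (2*m+1-m) * ((2*m+1) choose m) = (fact (2*m+1) :: nat)"
    by (rule binomial_fact_lemma) simp
  then have eq: "(fact m * fact (m+1)) * ((2*m+1) choose m) = (fact (2*m+1) :: nat)"
    by (simp only: e)
  have "p dvd (fact (2*m+1)::nat)" using assms prime_dvd_fact_iff by blast
  then have d: "p dvd (fact m * fact (m+1)) * ((2*m+1) choose m)" by (simp only: eq)
  have n1: "\<not> p dvd (fact m :: nat)" using assms prime_dvd_fact_iff[of p m] by simp
  have n2: "\<not> p dvd (fact (m+1) :: nat)" using assms prime_dvd_fact_iff[of p "m+1"] by simp
  have "\<not> p dvd (fact m * fact (m+1) :: nat)"
    using n1 n2 prime_dvd_mult_iff[OF assms(1)] by blast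
  then show ?thesis using d prime_dvd_mult_iff[OF assms(1)] by blast
qed

lemma prm_small: "n \<le> 1 \<Longrightarrow> prm n = 1"
proof -
  assume n1: "n \<le> 1"
  have e: "{p\<in>{..n}. prime p} = {}"
  proof -
    { fix x assume "x \<le> n" "prime x"
      then have False using prime_ge_2_nat[of x] n1 by simp }
    then show ?thesis by auto
  qed
  show ?thesis unfolding prm_def e by simp
qed

lemma prm_le: "prm n \<le> 4^n"
proof (induction n rule: less_induct)
  case (less n)
  show ?case
  proof (cases "n \<le> 2")
    case True
    show ?thesis
    proof (cases "n \<le> 1")
      case True then show ?thesis using prm_small by simp
    next
      case False
      then have "n = 2" using \<open>n \<le> 2\<close> by simp
      have "{p\<in>{..2::nat}. prime p} = {2}"
      proof (intro set_eqI iffI)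
        fix x assume "x \<in> {p\<in>{..2::nat}. prime p}"
        then have "x \<le> 2" "prime x" by auto
        then have "x \<ge> 2" using prime_ge_2_nat by blast
        then show "x \<in> {2}" using \<open>x \<le> 2\<close> by simp
      qed auto
      then show ?thesis using \<open>n = 2\<close> unfolding prm_def by simp
    qed
  next
    case False
    show ?thesis
    proof (cases "even n")
      case True
      then have np: "\<not> prime n" using False prime_odd_nat[of n] by auto
      have "{p\<in>{..n}. prime p} = {p\<in>{..n-1}. prime p}"
      proof (intro set_eqI iffI)
        fix x assume "x \<in> {p\<in>{..n}. prime p}"
        then have "x \<le> n" "prime x" by auto
        then have "x \<noteq> n" using np by auto
        then show "x \<in> {p\<in>{..n-1}. prime p}" using \<open>x \<le> n\<close> \<open>prime x\<close> by auto
      qed auto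
      then have "prm n = prm (n-1)" unfolding prm_def by simp
      also have "\<dots> \<le> 4^(n-1)" using less False by simp
      also have "\<dots> \<le> 4^n" by (intro power_increasing) auto
      finally show ?thesis .
    next
      case odd: False
      then obtain m where m: "n = 2*m+1" by (metis oddE)
      have un: "{p\<in>{..n}. prime p} = {p\<in>{..m+1}. prime p} \<union> {p\<in>{m+2..n}. prime p}" using m by auto
      have "prm n = prm (m+1) * \<Prod>{p\<in>{m+2..n}. prime p}" unfolding prm_def un
        by (rule prod.union_disjoint) auto
      moreover have B: "\<Prod>{p\<in>{m+2..n}. prime p} \<le> (2*m+1) choose m"
      proof (rule dvd_imp_le)
        show "\<Prod>{p\<in>{m+2..n}. prime p} dvd (2*m+1) choose m"
        proof (rule primes_prod_dvd)
          show "\<forall>p\<in>{p\<in>{m+2..n}. prime p}. prime p \<and> p dvd (2*m+1) choose m"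
          proof
            fix p assume "p \<in> {p\<in>{m+2..n}. prime p}"
            then have "prime p" "m+1 < p" "p \<le> 2*m+1" using m by auto
            then show "prime p \<and> p dvd (2*m+1) choose m" using prime_dvd_binom_mid by blast
          qed
        qed simp
        show "0 < (2*m+1) choose m" by simp
      qed
      moreover have A: "prm (m+1) \<le> 4^(m+1)"
      proof -
        have "m+1 < n" using m False by simp
        then show ?thesis using less by blast
      qed
      ultimately have "prm n \<le> 4^(m+1) * 4^m"
        using mult_le_mono[OF A order.trans[OF B binom_mid_le[of m]]] by simp
      also have "\<dots> = 4^n" using m by (simp add: power_add[symmetric])
      finally show ?thesis .
    qed
  qed
qed



definition PS :: "nat \<Rightarrow> nat set" where "PS n = {p\<in>{..n}. prime p}"

lemma PS_finite[simp]: "finite (PS n)" unfolding PS_def by simp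

lemma theta_le: "(\<Sum>p\<in>PS n. ln (real p)) \<le> real n * ln 4"
proof -
  have "(\<Sum>p\<in>PS n. ln (real p)) = ln (real (prm n))"
    unfolding prm_def PS_def
    by (subst ln_prod[symmetric]) (auto dest: prime_gt_0_nat)
  also have "\<dots> \<le> ln (4 ^ n)"
  proof -
    have "real (prm n) \<le> 4^n" using prm_le[of n] by (metis of_nat_le_iff of_nat_numeral of_nat_power)
    moreover have "real (prm n) > 0" unfolding prm_def by (auto intro!: prod_pos dest: prime_gt_0_nat)
    ultimately show ?thesis by simp
  qed
  also have "\<dots> = real n * ln 4" by (simp add: ln_realpow)
  finally show ?thesis .
qed

lemma sum_ln_pf_le:
  assumes "k \<ge> 1"
  shows "(\<Sum>p\<in>prime_factors k. ln (real p)) \<le> ln (real k)"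
proof -
  have "\<Prod>(prime_factors k) dvd k"
    by (rule primes_prod_dvd) (auto dest: in_prime_factors_imp_prime)
  then have le: "\<Prod>(prime_factors k) \<le> k" using assms by (intro dvd_imp_le) auto
  have pos: "\<And>p. p \<in> prime_factors k \<Longrightarrow> real p > 0"
    by (auto dest: in_prime_factors_imp_prime prime_gt_0_nat)
  have "(\<Sum>p\<in>prime_factors k. ln (real p)) = ln (\<Prod>p\<in>prime_factors k. real p)"
    using pos by (subst ln_prod) auto
  also have "(\<Prod>p\<in>prime_factors k. real p) = real (\<Prod>(prime_factors k))" by simp
  also have "ln \<dots> \<le> ln (real k)"
  proof -
    have r: "real (\<Prod>(prime_factors k)) \<le> real k" using le by (simp only: of_nat_le_iff)
    have "0 < \<Prod>(prime_factors k)"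
      by (auto intro!: prod_pos dest: in_prime_factors_imp_prime prime_gt_0_nat)
    then have "real (\<Prod>(prime_factors k)) > 0" by (simp only: of_nat_0_less_iff)
    then show ?thesis using r assms by simp
  qed
  finally show ?thesis .
qed

lemma mertens_sum:
  assumes "n \<ge> 1"
  shows "(\<Sum>p\<in>PS n. ln (real p) / real p) \<le> ln (real n) + ln 4"
proof -
  have pf_eq: "prime_factors k = {p\<in>PS n. p dvd k}" if "k \<in> {1..n}" for k
  proof (intro set_eqI iffI)
    fix p assume "p \<in> prime_factors k"
    then have "prime p" "p dvd k" by (auto dest: in_prime_factors_imp_prime)
    moreover then have "p \<le> k" using that by (intro dvd_imp_le) auto
    ultimately show "p \<in> {p\<in>PS n. p dvd k}" using that unfolding PS_def by auto
  next
    fix p assume "p \<in> {p\<in>PS n. p dvd k}"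
    then show "p \<in> prime_factors k" using that unfolding PS_def by (auto intro: in_prime_factors_iff[THEN iffD2])
  qed
  have "(\<Sum>k\<in>{1..n}. \<Sum>p\<in>prime_factors k. ln (real p)) = (\<Sum>k\<in>{1..n}. \<Sum>p\<in>PS n. if p dvd k then ln (real p) else 0)"
  proof (rule sum.cong[OF refl])
    fix k assume k: "k \<in> {1..n}"
    show "(\<Sum>p\<in>prime_factors k. ln (real p)) = (\<Sum>p\<in>PS n. if p dvd k then ln (real p) else 0)"
      unfolding pf_eq[OF k] by (rule sum.inter_filter[OF PS_finite])
  qed
  also have "\<dots> = (\<Sum>p\<in>PS n. \<Sum>k\<in>{1..n}. if p dvd k then ln (real p) else 0)"
    by (rule sum.swap)
  also have "\<dots> = (\<Sum>p\<in>PS n. ln (real p) * real (card {k\<in>{1..n}. p dvd k}))"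
    by (intro sum.cong refl) (simp add: sum.inter_filter[symmetric])
  finally have eq: "(\<Sum>k\<in>{1..n}. \<Sum>p\<in>prime_factors k. ln (real p)) =
      (\<Sum>p\<in>PS n. ln (real p) * real (card {k\<in>{1..n}. p dvd k}))" .
  have "(\<Sum>k\<in>{1..n}. \<Sum>p\<in>prime_factors k. ln (real p)) \<le> (\<Sum>k\<in>{1..n}. ln (real n))"
  proof (rule sum_mono)
    fix k assume k: "k \<in> {1..n}"
    then have "(\<Sum>p\<in>prime_factors k. ln (real p)) \<le> ln (real k)" by (intro sum_ln_pf_le) auto
    also have "\<dots> \<le> ln (real n)" using k by auto
    finally show "(\<Sum>p\<in>prime_factors k. ln (real p)) \<le> ln (real n)" .
  qed
  also have "\<dots> = real n * ln (real n)" by simp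
  finally have A: "(\<Sum>p\<in>PS n. ln (real p) * real (card {k\<in>{1..n}. p dvd k})) \<le> real n * ln (real n)"
    using eq by simp
  have "(\<Sum>p\<in>PS n. ln (real p) * (real n / real p - 1)) \<le> (\<Sum>p\<in>PS n. ln (real p) * real (card {k\<in>{1..n}. p dvd k}))"
  proof (rule sum_mono)
    fix p assume p: "p \<in> PS n"
    then have pp: "prime p" unfolding PS_def by auto
    then have p0: "p > 0" by (simp add: prime_gt_0_nat)
    have "real n / real p - 1 \<le> real (n div p)"
    proof -
      have "n < (n div p + 1) * p" using p0
        by (metis add.commute div_mult_mod_eq mod_less_divisor add_less_mono1 distrib_right mult_1)
      then have "real n < (real (n div p) + 1) * real p"
        by (metis of_nat_1 of_nat_add of_nat_less_iff of_nat_mult)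
      then show ?thesis using p0 by (simp add: field_simps)
    qed
    moreover have "ln (real p) \<ge> 0" using p0 by simp
    ultimately show "ln (real p) * (real n / real p - 1) \<le> ln (real p) * real (card {k\<in>{1..n}. p dvd k})"
      using card_multiples[OF p0, of n] by (intro mult_left_mono) auto
  qed
  with A have B: "(\<Sum>p\<in>PS n. ln (real p) * (real n / real p - 1)) \<le> real n * ln (real n)" by linarith
  have "(\<Sum>p\<in>PS n. ln (real p) * (real n / real p - 1)) =
        real n * (\<Sum>p\<in>PS n. ln (real p) / real p) - (\<Sum>p\<in>PS n. ln (real p))"
    by (simp add: sum_distrib_left sum_subtractf[symmetric] algebra_simps)
  with B theta_le[of n] have "real n * (\<Sum>p\<in>PS n. ln (real p) / real p) \<le> real n * (ln (real n) + ln 4)"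
    by (simp add: algebra_simps)
  then show ?thesis using assms by simp
qed



definition SR :: "nat \<Rightarrow> real" where "SR n = (\<Sum>p\<in>PS n. 1 / real p)"
definition AM :: "nat \<Rightarrow> real" where "AM n = (\<Sum>p\<in>PS n. ln (real p) / real p)"

lemma PS_Suc: "PS (Suc n) = (if prime (Suc n) then insert (Suc n) (PS n) else PS n)"
  unfolding PS_def by (auto simp: le_Suc_eq)

lemma SR_Suc: "SR (Suc n) = SR n + (if prime (Suc n) then 1 / real (Suc n) else 0)"
  unfolding SR_def PS_Suc by (simp add: PS_def)

lemma AM_Suc: "AM (Suc n) = AM n + (if prime (Suc n) then ln (real (Suc n)) / real (Suc n) else 0)"
  unfolding AM_def PS_Suc by (simp add: PS_def)

lemma PS_2: "PS 2 = {2}"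
proof (intro set_eqI iffI)
  fix x assume "x \<in> PS 2"
  then have "x \<le> 2" "prime x" unfolding PS_def by auto
  then have "x \<ge> 2" using prime_ge_2_nat by blast
  then show "x \<in> {2}" using \<open>x \<le> 2\<close> by simp
qed (auto simp: PS_def)

lemma T_bound:
  assumes "N \<ge> 2"
  shows "SR N - AM N / ln (real N) \<le> ln (ln (real N)) - ln (ln 2) + ln 4 * (1 / ln 2 - 1 / ln (real N))"
  using assms
proof (induction N rule: dec_induct)
  case base
  have a: "SR 2 = 1/2" "AM 2 = ln 2 / 2" unfolding SR_def AM_def PS_2 by auto
  have "(ln 2 / 2) / ln (2::real) = 1/2" by simp
  then have b: "AM 2 / ln 2 = 1/2" by (simp only: a(2))
  have c: "ln (real 2) = ln (2::real)" by simp
  have "SR 2 - AM 2 / ln (real 2) = 0" unfolding c using a(1) b by linarith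
  then show ?case by simp
next
  case (step N)
  have N2: "real N \<ge> 2" using step by simp
  have lnN: "ln (real N) > 0" using N2 by simp
  have lnN1: "ln (real (Suc N)) > ln (real N)" using N2 by simp
  have lnN1p: "ln (real (Suc N)) > 0" using lnN lnN1 by linarith
  have T1: "SR (Suc N) - AM (Suc N) / ln (real (Suc N)) = SR N - AM N / ln (real (Suc N))"
  proof -
    have "ln (real (Suc N)) / real (Suc N) / ln (real (Suc N)) = (ln (real (Suc N)) / ln (real (Suc N))) / real (Suc N)"
      by (simp add: divide_divide_eq_left mult.commute)
    also have "\<dots> = 1 / real (Suc N)" using lnN1p by simp
    finally have "ln (real (Suc N)) / real (Suc N) / ln (real (Suc N)) = 1 / real (Suc N)" .
    then show ?thesis unfolding SR_Suc AM_Suc by (simp add: add_divide_distrib)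
  qed
  define d where "d = 1 / ln (real N) - 1 / ln (real (Suc N))"
  have d0: "d \<ge> 0" unfolding d_def using lnN lnN1 by (simp add: frac_le)
  have AMle: "AM N \<le> ln (real N) + ln 4" unfolding AM_def using mertens_sum[of N] step by simp
  have "SR N - AM N / ln (real (Suc N)) = (SR N - AM N / ln (real N)) + AM N * d"
    unfolding d_def by (simp add: algebra_simps)
  also have "AM N * d \<le> (ln (real N) + ln 4) * d" using AMle d0 by (rule mult_right_mono)
  also have "(ln (real N) + ln 4) * d = ln (real N) * d + ln 4 * d" by (simp add: algebra_simps)
  also have "ln (real N) * d \<le> ln (ln (real (Suc N))) - ln (ln (real N))"
  proof -
    have "ln (real N) * d = 1 - ln (real N) / ln (real (Suc N))"
      unfolding d_def using lnN lnN1p by (simp add: field_simps)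
    moreover have "ln (ln (real N) / ln (real (Suc N))) \<le> ln (real N) / ln (real (Suc N)) - 1"
      using lnN lnN1p by (intro ln_le_minus_one) simp
    moreover have "ln (ln (real N) / ln (real (Suc N))) = ln (ln (real N)) - ln (ln (real (Suc N)))"
      using lnN lnN1p by (simp add: ln_div)
    ultimately show ?thesis by linarith
  qed
  finally have "SR (Suc N) - AM (Suc N) / ln (real (Suc N)) \<le>
     (SR N - AM N / ln (real N)) + (ln (ln (real (Suc N))) - ln (ln (real N))) + ln 4 * d"
    using T1 by linarith
  also have "\<dots> \<le> ln (ln (real N)) - ln (ln 2) + ln 4 * (1 / ln 2 - 1 / ln (real N))
       + (ln (ln (real (Suc N))) - ln (ln (real N))) + ln 4 * d"
    using step.IH by linarith
  also have "\<dots> = ln (ln (real (Suc N))) - ln (ln 2) + ln 4 * (1 / ln 2 - 1 / ln (real (Suc N)))"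
    unfolding d_def by (simp add: algebra_simps)
  finally show ?case .
qed

lemma SR_bound:
  assumes "N \<ge> 2"
  shows "SR N \<le> ln (ln (real N)) + 3 - ln (ln 2)"
proof -
  have N2: "real N \<ge> 2" using assms by simp
  have lnN: "ln (real N) > 0" using N2 by simp
  have ln2: "ln (2::real) > 0" by simp
  have AMle: "AM N \<le> ln (real N) + ln 4" unfolding AM_def using mertens_sum[of N] assms by simp
  have "AM N / ln (real N) \<le> (ln (real N) + ln 4) / ln (real N)"
    using AMle lnN by (simp add: divide_right_mono)
  also have "\<dots> = 1 + ln 4 / ln (real N)" using lnN by (simp add: field_simps)
  finally have B: "AM N / ln (real N) \<le> 1 + ln 4 / ln (real N)" .
  have l4: "ln (4::real) = 2 * ln 2"
    using ln_realpow[of 2 2] by simp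
  have "SR N \<le> ln (ln (real N)) - ln (ln 2) + ln 4 * (1 / ln 2 - 1 / ln (real N)) + (1 + ln 4 / ln (real N))"
    using T_bound[OF assms] B by linarith
  also have "\<dots> = ln (ln (real N)) - ln (ln 2) + 3"
    using ln2 by (simp add: l4 field_simps)
  finally show ?thesis by simp
qed



lemma pow_card_expand:
  fixes \<mu> :: real
  assumes "finite A"
  shows "(1 + \<mu>) ^ card A = (\<Sum>X\<in>Pow A. \<mu> ^ card X)"
proof -
  have "(\<Prod>x\<in>A. \<mu> + 1) = (\<Sum>X\<in>Pow A. (\<Prod>x\<in>X. \<mu>) * (\<Prod>x\<in>A-X. 1))"
    by (rule prod_add[OF assms])
  then show ?thesis by (simp add: add.commute)
qed

lemma prod_add_one:
  fixes f :: "nat \<Rightarrow> real"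
  assumes "finite A"
  shows "(\<Prod>x\<in>A. 1 + f x) = (\<Sum>X\<in>Pow A. \<Prod>x\<in>X. f x)"
proof -
  have "(\<Prod>x\<in>A. f x + 1) = (\<Sum>X\<in>Pow A. (\<Prod>x\<in>X. f x) * (\<Prod>x\<in>A-X. 1))"
    by (rule prod_add[OF assms])
  then show ?thesis by (simp add: add.commute)
qed

lemma omega_moment:
  assumes "x \<ge> 1"
  shows "(\<Sum>n\<in>{1..x}. sqrt 2 ^ card (prime_factors n)) \<le> real x * exp ((sqrt 2 - 1) * SR x)"
proof -
  define \<mu> :: real where "\<mu> = sqrt 2 - 1"
  have mu0: "\<mu> \<ge> 0" unfolding \<mu>_def by simp
  have s2: "sqrt 2 = 1 + \<mu>" unfolding \<mu>_def by simp
  have pfsub: "prime_factors n \<subseteq> PS x" if "n \<in> {1..x}" for n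
  proof
    fix p assume "p \<in> prime_factors n"
    then have "prime p" "p dvd n" by (auto dest: in_prime_factors_imp_prime)
    then have "p \<le> n" using that by (intro dvd_imp_le) auto
    then show "p \<in> PS x" using that \<open>prime p\<close> unfolding PS_def by auto
  qed
  have "(\<Sum>n\<in>{1..x}. sqrt 2 ^ card (prime_factors n)) =
        (\<Sum>n\<in>{1..x}. \<Sum>X\<in>Pow (PS x). if X \<subseteq> prime_factors n then \<mu> ^ card X else 0)"
  proof (rule sum.cong[OF refl])
    fix n assume n: "n \<in> {1..x}"
    have e: "Pow (prime_factors n) = {X\<in>Pow (PS x). X \<subseteq> prime_factors n}" using pfsub[OF n] by auto
    have "(\<Sum>X\<in>Pow (prime_factors n). \<mu> ^ card X) = (\<Sum>X\<in>Pow (PS x). if X \<subseteq> prime_factors n then \<mu> ^ card X else 0)"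
      unfolding e by (rule sum.inter_filter) simp
    then show "sqrt 2 ^ card (prime_factors n) = (\<Sum>X\<in>Pow (PS x). if X \<subseteq> prime_factors n then \<mu> ^ card X else 0)"
      unfolding s2 by (simp add: pow_card_expand)
  qed
  also have "\<dots> = (\<Sum>X\<in>Pow (PS x). \<Sum>n\<in>{1..x}. if X \<subseteq> prime_factors n then \<mu> ^ card X else 0)"
    by (rule sum.swap)
  also have "\<dots> = (\<Sum>X\<in>Pow (PS x). \<mu> ^ card X * real (card {n\<in>{1..x}. X \<subseteq> prime_factors n}))"
    by (intro sum.cong refl) (simp add: sum.inter_filter[symmetric])
  also have "\<dots> \<le> (\<Sum>X\<in>Pow (PS x). \<mu> ^ card X * (real x / real (\<Prod>X)))"
  proof (rule sum_mono)
    fix X assume X: "X \<in> Pow (PS x)"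
    then have fX: "finite X" using finite_subset[OF _ PS_finite] by auto
    have prX: "\<forall>p\<in>X. prime p" using X unfolding PS_def by auto
    have pos: "\<Prod>X > 0" using prX by (auto intro!: prod_pos dest: prime_gt_0_nat)
    have "{n\<in>{1..x}. X \<subseteq> prime_factors n} \<subseteq> {n\<in>{1..x}. \<Prod>X dvd n}"
    proof
      fix n assume "n \<in> {n\<in>{1..x}. X \<subseteq> prime_factors n}"
      then have n: "n \<in> {1..x}" "X \<subseteq> prime_factors n" by auto
      have "\<Prod>X dvd n"
        using fX n(2) prX by (intro primes_prod_dvd) (auto dest: in_prime_factors_imp_dvd)
      then show "n \<in> {n\<in>{1..x}. \<Prod>X dvd n}" using n by auto
    qed
    then have "card {n\<in>{1..x}. X \<subseteq> prime_factors n} \<le> card {n\<in>{1..x}. \<Prod>X dvd n}"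
      by (intro card_mono) auto
    then have "real (card {n\<in>{1..x}. X \<subseteq> prime_factors n}) \<le> real x / real (\<Prod>X)"
      using card_multiples_le[OF pos, of x] by linarith
    then show "\<mu> ^ card X * real (card {n\<in>{1..x}. X \<subseteq> prime_factors n}) \<le> \<mu> ^ card X * (real x / real (\<Prod>X))"
      using mu0 by (intro mult_left_mono) auto
  qed
  also have "\<dots> = real x * (\<Sum>X\<in>Pow (PS x). \<Prod>p\<in>X. \<mu> / real p)"
  proof -
    have "\<mu> ^ card X * (real x / real (\<Prod>X)) = real x * (\<Prod>p\<in>X. \<mu> / real p)" if "X \<in> Pow (PS x)" for X
    proof -
      have fX: "finite X" using that finite_subset[OF _ PS_finite] by auto
      have "(\<Prod>p\<in>X. \<mu> / real p) = (\<Prod>p\<in>X. \<mu>) / (\<Prod>p\<in>X. real p)" by (rule prod_dividef)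
      also have "\<dots> = \<mu> ^ card X / real (\<Prod>X)" by simp
      finally show ?thesis by simp
    qed
    then show ?thesis by (simp add: sum_distrib_left)
  qed
  also have "\<dots> = real x * (\<Prod>p\<in>PS x. 1 + \<mu> / real p)"
    by (simp add: prod_add_one)
  also have "\<dots> \<le> real x * (\<Prod>p\<in>PS x. exp (\<mu> / real p))"
  proof (intro mult_left_mono prod_mono)
    fix p assume "p \<in> PS x"
    show "0 \<le> 1 + \<mu> / real p \<and> 1 + \<mu> / real p \<le> exp (\<mu> / real p)"
      using mu0 by (auto intro: exp_ge_add_one_self)
  qed simp
  also have "(\<Prod>p\<in>PS x. exp (\<mu> / real p)) = exp (\<Sum>p\<in>PS x. \<mu> / real p)"
    by (simp add: exp_sum)
  also have "(\<Sum>p\<in>PS x. \<mu> / real p) = \<mu> * SR x"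
    unfolding SR_def by (simp add: sum_distrib_left)
  finally show ?thesis unfolding \<mu>_def .
qed



lemma divisors_finite: "n > 0 \<Longrightarrow> finite (divisors_set n)"
  unfolding divisors_set_def by (rule finite_subset[of _ "{..n}"]) (auto dest: dvd_imp_le)

lemma self_in_divisors: "n > 0 \<Longrightarrow> n \<in> divisors_set n"
  unfolding divisors_set_def by auto

lemma practical_card:
  assumes "s_practical n"
  shows "S_s n \<le> 2 ^ card (divisors_set n)"
proof -
  have n0: "n > 0" using assms unfolding s_practical_def by auto
  have ex: "\<exists>D. D \<subseteq> divisors_set n \<and> m = (\<Sum>d\<in>D. s_fn d)" if "m \<in> {1..S_s n}" for m
    using assms that unfolding s_practical_def by auto
  define f where "f m = (SOME D. D \<subseteq> divisors_set n \<and> m = (\<Sum>d\<in>D. s_fn d))" for m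
  have f: "f m \<subseteq> divisors_set n \<and> m = (\<Sum>d\<in>f m. s_fn d)" if "m \<in> {1..S_s n}" for m
    unfolding f_def using someI_ex[OF ex[OF that]] .
  have "inj_on f {1..S_s n}"
  proof (rule inj_onI)
    fix a b assume a: "a \<in> {1..S_s n}" and b: "b \<in> {1..S_s n}" and e: "f a = f b"
    have "a = (\<Sum>d\<in>f a. s_fn d)" using f[OF a] by blast
    also have "\<dots> = (\<Sum>d\<in>f b. s_fn d)" using e by simp
    also have "\<dots> = b" using f[OF b] by simp
    finally show "a = b" .
  qed
  moreover have "f ` {1..S_s n} \<subseteq> Pow (divisors_set n)"
  proof (rule image_subsetI)
    fix m assume "m \<in> {1..S_s n}"
    then show "f m \<in> Pow (divisors_set n)" using f by blast
  qed
  ultimately have "card {1..S_s n} \<le> card (Pow (divisors_set n))"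
    using divisors_finite[OF n0] by (intro card_inj_on_le) auto
  then show ?thesis using divisors_finite[OF n0] by (simp add: card_Pow)
qed

lemma sigma_ge_two:
  assumes "n > 0" "d dvd n" "d \<noteq> n" "d > 0"
  shows "d + n \<le> sigma_fn n"
proof -
  have "{d, n} \<subseteq> divisors_set n" using assms unfolding divisors_set_def by auto
  then have "(\<Sum>e\<in>{d,n}. e) \<le> (\<Sum>e\<in>divisors_set n. e)"
    using divisors_finite[OF assms(1)] by (intro sum_mono2) auto
  then show ?thesis using assms unfolding sigma_fn_def by simp
qed

lemma S_s_ge_s: "n > 0 \<Longrightarrow> s_fn n \<le> S_s n"
  unfolding S_s_def using divisors_finite self_in_divisors
  by (intro member_le_sum) auto

lemma composite_S_s:
  assumes "n \<ge> 2" "\<not> prime n"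
  shows "n \<le> S_s n ^ 2"
proof -
  obtain d where d: "d dvd n" "d \<noteq> 1" "d \<noteq> n"
    using assms prime_nat_iff by auto
  have n0: "n > 0" using assms by simp
  have d0: "d > 0" using d n0 by (auto intro: Nat.gr0I)
  obtain e where e: "n = d * e" using d(1) by (auto elim: dvdE)
  have e0: "e > 0" using e n0 by (cases "e = 0") auto
  have "e dvd n" using e by simp
  have "e \<noteq> n"
  proof
    assume "e = n"
    then have "1 * e = d * e" using e by simp
    then have "d = 1" using e0 by (simp only: mult_cancel2) simp
    then show False using d(2) by simp
  qed
  have "d + n \<le> sigma_fn n" using sigma_ge_two[OF n0 d(1) d(3) d0] .
  then have sd: "d \<le> s_fn n" unfolding s_fn_def by simp
  have "e + n \<le> sigma_fn n" using sigma_ge_two[OF n0 \<open>e dvd n\<close> \<open>e \<noteq> n\<close> e0] .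
  then have se: "e \<le> s_fn n" unfolding s_fn_def by simp
  have "n \<le> s_fn n * s_fn n" using e mult_le_mono[OF sd se] by simp
  also have "\<dots> \<le> S_s n * S_s n" using S_s_ge_s[OF n0] by (intro mult_le_mono) auto
  finally show ?thesis by (simp add: power2_eq_square)
qed

lemma card_divisors_le:
  assumes "n > 0"
  shows "card (divisors_set n) \<le> (\<Prod>p\<in>prime_factors n. multiplicity p n + 1)"
proof -
  define g where "g d = restrict (\<lambda>p. multiplicity p d) (prime_factors n)" for d :: nat
  have rep: "d = (\<Prod>p\<in>prime_factors n. p ^ multiplicity p d)" if "d \<in> divisors_set n" for d
  proof -
    have d: "d dvd n" "d > 0" using that unfolding divisors_set_def by auto
    have sub: "prime_factors d \<subseteq> prime_factors n"
      using d assms by (auto simp: in_prime_factors_iff intro: dvd_trans)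
    have "d = (\<Prod>p\<in>prime_factors d. p ^ multiplicity p d)" using prime_factorization_nat d(2) by blast
    also have "\<dots> = (\<Prod>p\<in>prime_factors n. p ^ multiplicity p d)"
    proof (rule prod.mono_neutral_left)
      show "\<forall>i\<in>prime_factors n - prime_factors d. i ^ multiplicity i d = 1"
      proof
        fix p assume p: "p \<in> prime_factors n - prime_factors d"
        then have "\<not> p dvd d" using d by (auto simp: in_prime_factors_iff)
        then show "p ^ multiplicity p d = 1" by (simp add: not_dvd_imp_multiplicity_0)
      qed
    qed (use sub in auto)
    finally show ?thesis .
  qed
  have "inj_on g (divisors_set n)"
  proof (rule inj_onI)
    fix a b assume a: "a \<in> divisors_set n" and b: "b \<in> divisors_set n" and e: "g a = g b"
    have "\<And>p. p \<in> prime_factors n \<Longrightarrow> multiplicity p a = multiplicity p b"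
      using e unfolding g_def by (metis restrict_apply')
    then have "(\<Prod>p\<in>prime_factors n. p ^ multiplicity p a) = (\<Prod>p\<in>prime_factors n. p ^ multiplicity p b)"
      by (intro prod.cong) auto
    then show "a = b" using rep[OF a] rep[OF b] by simp
  qed
  moreover have "g ` divisors_set n \<subseteq> PiE (prime_factors n) (\<lambda>p. {0..multiplicity p n})"
  proof
    fix y assume "y \<in> g ` divisors_set n"
    then obtain d where d: "d \<in> divisors_set n" "y = g d" by auto
    then have "d dvd n" unfolding divisors_set_def by auto
    then have "multiplicity p d \<le> multiplicity p n" for p
      using assms by (intro dvd_imp_multiplicity_le) auto
    then show "y \<in> PiE (prime_factors n) (\<lambda>p. {0..multiplicity p n})"
      unfolding d(2) g_def by auto
  qed
  ultimately have "card (divisors_set n) \<le> card (PiE (prime_factors n) (\<lambda>p. {0..multiplicity p n}))"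
    by (intro card_inj_on_le) (auto intro!: finite_PiE)
  also have "\<dots> = (\<Prod>p\<in>prime_factors n. multiplicity p n + 1)"
    by (simp add: card_PiE)
  finally show ?thesis .
qed

definition tame :: "nat \<Rightarrow> nat \<Rightarrow> bool" where
  "tame Y n \<longleftrightarrow> (\<forall>p. prime p \<longrightarrow> p dvd n \<longrightarrow> (p^2 dvd n \<longrightarrow> p \<le> Y) \<and> \<not> p^(Y+1) dvd n)"

lemma tame_tau:
  assumes "n > 0" "tame Y n"
  shows "card (divisors_set n) \<le> 2 ^ card (prime_factors n) * (Y+1)^Y"
proof -
  have b: "multiplicity p n + 1 \<le> 2 * (if p \<le> Y then Y+1 else 1)" if p: "p \<in> prime_factors n" for p
  proof -
    have pp: "prime p" "p dvd n" using p by (auto simp: in_prime_factors_iff)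
    have nu: "\<not> is_unit p" using pp by auto
    have "\<not> p^(Y+1) dvd n" using assms(2) pp unfolding tame_def by blast
    then have mY: "multiplicity p n \<le> Y" using power_dvd_iff_le_multiplicity[of n p "Y+1"] assms nu by simp
    show ?thesis
    proof (cases "p \<le> Y")
      case True then show ?thesis using mY by simp
    next
      case False
      then have "\<not> p^2 dvd n" using assms(2) pp unfolding tame_def by blast
      then have "multiplicity p n < 2" using power_dvd_iff_le_multiplicity[of n p 2] assms nu by simp
      then show ?thesis using False by simp
    qed
  qed
  have "card (divisors_set n) \<le> (\<Prod>p\<in>prime_factors n. multiplicity p n + 1)"
    by (rule card_divisors_le[OF assms(1)])
  also have "\<dots> \<le> (\<Prod>p\<in>prime_factors n. 2 * (if p \<le> Y then Y+1 else 1))"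
    by (intro prod_mono) (use b in auto)
  also have "\<dots> = 2 ^ card (prime_factors n) * (\<Prod>p\<in>prime_factors n. if p \<le> Y then Y+1 else 1)"
    by (simp add: prod.distrib)
  also have "(\<Prod>p\<in>prime_factors n. if p \<le> Y then Y+1 else 1) = (\<Prod>p\<in>{p\<in>prime_factors n. p \<le> Y}. Y+1)"
    by (rule prod.inter_filter[symmetric]) auto
  also have "\<dots> = (Y+1) ^ card {p\<in>prime_factors n. p \<le> Y}" by simp
  also have "\<dots> \<le> (Y+1) ^ Y"
  proof (rule power_increasing)
    have "{p\<in>prime_factors n. p \<le> Y} \<subseteq> {1..Y}"
      by (auto simp: in_prime_factors_iff dest: prime_gt_0_nat)
    then have "card {p\<in>prime_factors n. p \<le> Y} \<le> card {1..Y}" by (intro card_mono) auto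
    then show "card {p\<in>prime_factors n. p \<le> Y} \<le> Y" by simp
  qed simp
  finally show ?thesis by simp
qed



lemma inv_sq_sum_aux:
  assumes "Y \<ge> 1"
  shows "(\<Sum>k\<in>{Y+1..Y+m}. 1 / (real k)^2) \<le> 1 / real Y - 1 / real (Y+m)"
proof (induction m)
  case 0 then show ?case by simp
next
  case (Suc m)
  have Y: "real Y \<ge> 1" using assms by simp
  have "(\<Sum>k\<in>{Y+1..Y+Suc m}. 1 / (real k)^2) = (\<Sum>k\<in>{Y+1..Y+m}. 1 / (real k)^2) + 1 / (real (Y+m+1))^2"
    by (simp add: add.commute)
  also have "\<dots> \<le> 1 / real Y - 1 / real (Y+m) + 1 / (real (Y+m+1))^2" using Suc by simp
  also have "1 / (real (Y+m+1))^2 \<le> 1 / real (Y+m) - 1 / real (Y+m+1)"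
  proof -
    define a where "a = real (Y+m)"
    have a1: "a \<ge> 1" unfolding a_def using Y by simp
    have r1: "real (Y+m+1) = a + 1" unfolding a_def by simp
    have r2: "real (Y+m) = a" unfolding a_def by simp
    have "1 / (a+1)^2 \<le> 1 / a - 1 / (a+1)"
    proof -
      have e: "1/a - 1/(a+1) = 1/(a*(a+1))" using a1 by (simp add: field_simps)
      have "a*(a+1) \<le> (a+1)*(a+1)" using a1 by (intro mult_right_mono) auto
      then have "a*(a+1) \<le> (a+1)^2" by (simp add: power2_eq_square)
      moreover have "0 < a*(a+1)" using a1 by simp
      moreover have "0 < (a+1)^2 * (a*(a+1))" using a1 by simp
      ultimately have "1/(a+1)^2 \<le> 1/(a*(a+1))" by (intro divide_left_mono) auto
      then show ?thesis using e by simp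
    qed
    then show ?thesis unfolding r1 r2 .
  qed
  finally show ?case by simp
qed

lemma inv_sq_sum:
  assumes "Y \<ge> 1"
  shows "(\<Sum>k\<in>{Y+1..x}. 1 / (real k)^2) \<le> 1 / real Y"
proof -
  have "(\<Sum>k\<in>{Y+1..x}. 1 / (real k)^2) \<le> (\<Sum>k\<in>{Y+1..Y+x}. 1 / (real k)^2)"
    by (intro sum_mono2) auto
  also have "\<dots> \<le> 1 / real Y - 1 / real (Y+x)" by (rule inv_sq_sum_aux[OF assms])
  also have "\<dots> \<le> 1 / real Y" by simp
  finally show ?thesis .
qed

lemma not_tame_cases:
  assumes "\<not> tame Y n" "n \<in> {1..x}"
  shows "n \<in> (\<Union>k\<in>{Y+1..x}. {n\<in>{1..x}. k^2 dvd n}) \<union> (\<Union>k\<in>{2..x}. {n\<in>{1..x}. k^(Y+1) dvd n})"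
proof -
  obtain p where p: "prime p" "p dvd n" "(p^2 dvd n \<and> \<not> p \<le> Y) \<or> p^(Y+1) dvd n"
    using assms(1) unfolding tame_def by blast
  have "p \<le> n" using p(2) assms(2) by (intro dvd_imp_le) auto
  then have "p \<le> x" using assms(2) by simp
  have "p \<ge> 2" using p(1) by (rule prime_ge_2_nat)
  show ?thesis using p \<open>p \<le> x\<close> \<open>p \<ge> 2\<close> assms(2) by auto
qed

lemma bad_count:
  assumes "Y \<ge> 1"
  shows "real (card {n\<in>{1..x}. \<not> tame Y n}) \<le> 3 * real x / real Y"
proof -
  let ?A = "\<Union>k\<in>{Y+1..x}. {n\<in>{1..x}. k^2 dvd n}"
  let ?B = "\<Union>k\<in>{2..x}. {n\<in>{1..x}. k^(Y+1) dvd n}"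
  have "{n\<in>{1..x}. \<not> tame Y n} \<subseteq> ?A \<union> ?B" using not_tame_cases by blast
  then have "card {n\<in>{1..x}. \<not> tame Y n} \<le> card (?A \<union> ?B)" by (intro card_mono) auto
  also have "\<dots> \<le> card ?A + card ?B" by (rule card_Un_le)
  also have "card ?A \<le> (\<Sum>k\<in>{Y+1..x}. card {n\<in>{1..x}. k^2 dvd n})" by (rule card_UN_le) simp
  also have "card ?B \<le> (\<Sum>k\<in>{2..x}. card {n\<in>{1..x}. k^(Y+1) dvd n})" by (rule card_UN_le) simp
  finally have c: "real (card {n\<in>{1..x}. \<not> tame Y n}) \<le>
     (\<Sum>k\<in>{Y+1..x}. real (card {n\<in>{1..x}. k^2 dvd n})) + (\<Sum>k\<in>{2..x}. real (card {n\<in>{1..x}. k^(Y+1) dvd n}))"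
    by (simp only: of_nat_add[symmetric] of_nat_sum[symmetric] of_nat_le_iff)
  have A: "(\<Sum>k\<in>{Y+1..x}. real (card {n\<in>{1..x}. k^2 dvd n})) \<le> real x / real Y"
  proof -
    have "(\<Sum>k\<in>{Y+1..x}. real (card {n\<in>{1..x}. k^2 dvd n})) \<le> (\<Sum>k\<in>{Y+1..x}. real x * (1 / (real k)^2))"
    proof (rule sum_mono)
      fix k assume k: "k \<in> {Y+1..x}"
      then have "k^2 > 0" by simp
      then have "real (card {n\<in>{1..x}. k^2 dvd n}) \<le> real x / real (k^2)" by (rule card_multiples_le)
      then show "real (card {n\<in>{1..x}. k^2 dvd n}) \<le> real x * (1 / (real k)^2)" by simp
    qed
    also have "\<dots> = real x * (\<Sum>k\<in>{Y+1..x}. 1 / (real k)^2)" by (simp add: sum_distrib_left)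
    also have "\<dots> \<le> real x * (1 / real Y)" by (intro mult_left_mono inv_sq_sum assms) simp
    finally show ?thesis by simp
  qed
  have B: "(\<Sum>k\<in>{2..x}. real (card {n\<in>{1..x}. k^(Y+1) dvd n})) \<le> 2 * real x / real Y"
  proof -
    have "(\<Sum>k\<in>{2..x}. real (card {n\<in>{1..x}. k^(Y+1) dvd n})) \<le> (\<Sum>k\<in>{2..x}. real x / 2^(Y-1) * (1 / (real k)^2))"
    proof (rule sum_mono)
      fix k assume k: "k \<in> {2..x}"
      then have "k^(Y+1) > 0" by simp
      then have c: "real (card {n\<in>{1..x}. k^(Y+1) dvd n}) \<le> real x / real (k^(Y+1))" by (rule card_multiples_le)
      have "(2::real)^(Y-1) * (real k)^2 \<le> (real k)^(Y-1) * (real k)^2"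
        using k by (intro mult_right_mono power_mono) auto
      also have "\<dots> = (real k)^(Y+1)" using assms by (simp add: power_add[symmetric])
      finally have kk: "(2::real)^(Y-1) * (real k)^2 \<le> (real k)^(Y+1)" .
      have "real x / real (k^(Y+1)) \<le> real x / ((2::real)^(Y-1) * (real k)^2)"
        using kk k by (intro divide_left_mono) auto
      also have "\<dots> = real x / 2^(Y-1) * (1 / (real k)^2)" by simp
      finally show "real (card {n\<in>{1..x}. k^(Y+1) dvd n}) \<le> real x / 2^(Y-1) * (1 / (real k)^2)"
        using c by linarith
    qed
    also have "\<dots> = real x / 2^(Y-1) * (\<Sum>k\<in>{2..x}. 1 / (real k)^2)" by (simp add: sum_distrib_left)
    also have "\<dots> \<le> real x / 2^(Y-1) * 1"
    proof -
      have "(\<Sum>k\<in>{2..x}. 1 / (real k)^2) \<le> 1" using inv_sq_sum[of 1 x] by (simp add: numeral_2_eq_2)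
      then show ?thesis by (intro mult_left_mono) auto
    qed
    also have "\<dots> \<le> 2 * real x / real Y"
    proof -
      have "real Y \<le> 2 * 2^(Y-1)"
      proof -
        have "Y < 2^Y" by (rule less_exp)
        also have "(2::nat)^Y = 2 * 2^(Y-1)" using assms by (cases Y) auto
        finally have "Y \<le> 2 * 2^(Y-1)" by simp
        then show ?thesis by (metis of_nat_le_iff of_nat_mult of_nat_numeral of_nat_power)
      qed
      then have "real x * real Y \<le> real x * (2 * 2^(Y-1))" by (intro mult_left_mono) auto
      then show ?thesis using assms by (simp add: field_simps mult.commute)
    qed
    finally show ?thesis .
  qed
  have "real x / real Y + 2 * real x / real Y = 3 * real x / real Y"
    by (simp add: add_divide_distrib[symmetric])
  then show ?thesis using c A B by linarith
qed



lemma small_count: "real (card {n\<in>{1..x}. real n \<le> sqrt (real x)}) \<le> sqrt (real x)"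
proof -
  define m where "m = nat \<lfloor>sqrt (real x)\<rfloor>"
  have "{n\<in>{1..x}. real n \<le> sqrt (real x)} \<subseteq> {1..m}"
  proof
    fix n assume "n \<in> {n\<in>{1..x}. real n \<le> sqrt (real x)}"
    then have n: "n \<ge> 1" "real n \<le> sqrt (real x)" by auto
    then have "int n \<le> \<lfloor>sqrt (real x)\<rfloor>" by (simp add: le_floor_iff)
    then have "n \<le> m" unfolding m_def by linarith
    then show "n \<in> {1..m}" using n by auto
  qed
  then have "card {n\<in>{1..x}. real n \<le> sqrt (real x)} \<le> card {1..m}" by (intro card_mono) auto
  also have "\<dots> = m" by simp
  finally have "real (card {n\<in>{1..x}. real n \<le> sqrt (real x)}) \<le> real m" by simp
  also have "real m \<le> sqrt (real x)" unfolding m_def by simp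
  finally show ?thesis .
qed

lemma prime_count:
  assumes "x \<ge> 2"
  shows "real (card {n\<in>{1..x}. prime n \<and> sqrt (real x) < real n}) * (ln (real x) / 2) \<le> real x * ln 4"
proof -
  let ?Q = "{n\<in>{1..x}. prime n \<and> sqrt (real x) < real n}"
  have x0: "real x > 0" using assms by simp
  have lnp: "ln (real x) / 2 \<le> ln (real p)" if p: "p \<in> ?Q" for p
  proof -
    have ps: "sqrt (real x) < real p" using p by auto
    have "real x = (sqrt (real x))^2" using x0 by simp
    also have "\<dots> < (real p)^2" using ps by (intro power_strict_mono) auto
    finally have "real x < (real p)^2" .
    then have "ln (real x) < ln ((real p)^2)" using x0 p by (subst ln_less_cancel_iff) (auto dest: prime_gt_0_nat)
    also have "\<dots> = 2 * ln (real p)" using p by (simp add: ln_realpow prime_gt_0_nat)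
    finally show ?thesis by simp
  qed
  have "real (card ?Q) * (ln (real x) / 2) = (\<Sum>p\<in>?Q. ln (real x) / 2)" by simp
  also have "\<dots> \<le> (\<Sum>p\<in>?Q. ln (real p))" by (rule sum_mono) (rule lnp)
  also have "\<dots> \<le> (\<Sum>p\<in>PS x. ln (real p))"
    by (rule sum_mono2) (auto simp: PS_def dest: prime_gt_0_nat)
  also have "\<dots> \<le> real x * ln 4" by (rule theta_le)
  finally show ?thesis .
qed

lemma main_count:
  assumes "x \<ge> 2" "Y \<ge> 1"
  shows "real (card {n\<in>{1..x}. sqrt (real x) < real n \<and> \<not> prime n \<and> tame Y n \<and> s_practical n})
      * sqrt (ln (real x) / (2 * ln 4 * real ((Y+1)^Y))) \<le> real x * exp ((sqrt 2 - 1) * SR x)"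
proof -
  let ?M = "{n\<in>{1..x}. sqrt (real x) < real n \<and> \<not> prime n \<and> tame Y n \<and> s_practical n}"
  let ?L = "ln (real x) / (2 * ln 4 * real ((Y+1)^Y))"
  have x0: "real x > 0" using assms by simp
  have K0: "2 * ln 4 * real ((Y+1)^Y) > (0::real)" by simp
  have key: "sqrt ?L \<le> sqrt 2 ^ card (prime_factors n)" if n: "n \<in> ?M" for n
  proof -
    have ns: "sqrt (real x) < real n" "\<not> prime n" "tame Y n" "s_practical n" using n by auto
    have "sqrt 2 \<le> sqrt (real x)" using assms by simp
    moreover have "1 < sqrt (2::real)" by simp
    ultimately have "1 < real n" using ns(1) by linarith
    then have n2: "n \<ge> 2" by simp
    have n0: "n > 0" using n2 by simp
    define \<tau> where "\<tau> = card (divisors_set n)"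
    define \<omega> where "\<omega> = card (prime_factors n)"
    have "n \<le> S_s n ^ 2" by (rule composite_S_s[OF n2 ns(2)])
    also have "\<dots> \<le> (2 ^ \<tau>)^2" unfolding \<tau>_def by (intro power_mono practical_card ns(4)) simp
    also have "\<dots> = 4 ^ \<tau>" by (simp add: power2_eq_square power_mult_distrib[symmetric])
    finally have "n \<le> 4 ^ \<tau>" .
    then have "real n \<le> 4 ^ \<tau>" by (metis of_nat_le_iff of_nat_numeral of_nat_power)
    then have "ln (real n) \<le> ln (4 ^ \<tau>)" using n0 by simp
    also have "\<dots> = real \<tau> * ln 4" by (simp add: ln_realpow)
    finally have lnn: "ln (real n) \<le> real \<tau> * ln 4" .
    have "\<tau> \<le> 2 ^ \<omega> * (Y+1)^Y" unfolding \<tau>_def \<omega>_def by (rule tame_tau[OF n0 ns(3)])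
    then have "real \<tau> \<le> 2 ^ \<omega> * real ((Y+1)^Y)" by (metis of_nat_le_iff of_nat_mult of_nat_numeral of_nat_power)
    then have "real \<tau> * ln 4 \<le> 2 ^ \<omega> * real ((Y+1)^Y) * ln 4" by (intro mult_right_mono) auto
    with lnn have lnn2: "ln (real n) \<le> 2 ^ \<omega> * real ((Y+1)^Y) * ln 4" by linarith
    have "real x < (real n)^2"
    proof -
      have "real x = (sqrt (real x))^2" using x0 by simp
      also have "\<dots> < (real n)^2" using ns(1) by (intro power_strict_mono) auto
      finally show ?thesis .
    qed
    then have "ln (real x) < ln ((real n)^2)" using x0 n0 by (subst ln_less_cancel_iff) auto
    also have "\<dots> = 2 * ln (real n)" using n0 by (simp add: ln_realpow)
    finally have "ln (real x) \<le> 2 * (2 ^ \<omega> * real ((Y+1)^Y) * ln 4)" using lnn2 by linarith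
    then have "?L \<le> 2 ^ \<omega>" using K0 by (simp add: divide_le_eq algebra_simps)
    then have "sqrt ?L \<le> sqrt (2 ^ \<omega>)" by simp
    also have "\<dots> = sqrt 2 ^ \<omega>" by (simp add: real_sqrt_power)
    finally show ?thesis unfolding \<omega>_def .
  qed
  have "real (card ?M) * sqrt ?L = (\<Sum>n\<in>?M. sqrt ?L)" by simp
  also have "\<dots> \<le> (\<Sum>n\<in>?M. sqrt 2 ^ card (prime_factors n))" by (rule sum_mono) (rule key)
  also have "\<dots> \<le> (\<Sum>n\<in>{1..x}. sqrt 2 ^ card (prime_factors n))" by (rule sum_mono2) auto
  also have "\<dots> \<le> real x * exp ((sqrt 2 - 1) * SR x)" by (rule omega_moment) (use assms in simp)
  finally show ?thesis .
qed



definition KY :: "nat \<Rightarrow> real" where "KY Y = 2 * ln 4 * real ((Y+1)^Y)"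
definition EY :: "nat \<Rightarrow> real" where "EY Y = exp ((sqrt 2 - 1) * (3 - ln (ln 2))) * sqrt (KY Y)"
definition gY :: "nat \<Rightarrow> nat \<Rightarrow> real" where
  "gY Y x = sqrt (real x) / real x + 2 * ln 4 / ln (real x) + EY Y * (ln (real x) powr (9/20) / sqrt (ln (real x)))"

lemma gY_lim: "gY Y \<longlonglongrightarrow> 0"
proof -
  have a: "(\<lambda>x::nat. sqrt (real x) / real x) \<longlonglongrightarrow> 0" by real_asymp
  have b: "(\<lambda>x::nat. 2 * ln 4 / ln (real x)) \<longlonglongrightarrow> 0" by real_asymp
  have c: "(\<lambda>x::nat. EY Y * (ln (real x) powr (9/20) / sqrt (ln (real x)))) \<longlonglongrightarrow> 0" by real_asymp
  have "(\<lambda>x. sqrt (real x) / real x + 2 * ln 4 / ln (real x) + EY Y * (ln (real x) powr (9/20) / sqrt (ln (real x)))) \<longlonglongrightarrow> 0 + 0 + 0"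
    by (intro tendsto_add a b c)
  then show ?thesis unfolding gY_def[abs_def] by simp
qed

lemma ratio_bound:
  assumes "x \<ge> 3" "Y \<ge> 1"
  shows "real (card {n\<in>{1..x}. s_practical n}) / real x \<le> 3 / real Y + gY Y x"
proof -
  let ?Sm = "{n\<in>{1..x}. real n \<le> sqrt (real x)}"
  let ?Pr = "{n\<in>{1..x}. prime n \<and> sqrt (real x) < real n}"
  let ?Bd = "{n\<in>{1..x}. \<not> tame Y n}"
  let ?M = "{n\<in>{1..x}. sqrt (real x) < real n \<and> \<not> prime n \<and> tame Y n \<and> s_practical n}"
  have x0: "real x > 0" using assms by simp
  have x3: "real x \<ge> 3" using assms by simp
  have lnx: "ln (real x) > 1"
  proof -
    have "exp 1 < (3::real)" using e_less_272 by linarith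
    then have "ln (exp 1) < ln (real x)" using x3 by (subst ln_less_cancel_iff) auto
    then show ?thesis by simp
  qed
  have sub: "{n\<in>{1..x}. s_practical n} \<subseteq> ?Sm \<union> ?Pr \<union> ?Bd \<union> ?M" by auto
  have "card {n\<in>{1..x}. s_practical n} \<le> card (?Sm \<union> ?Pr \<union> ?Bd \<union> ?M)"
    using sub by (intro card_mono) auto
  also have "\<dots> \<le> card ?Sm + card ?Pr + card ?Bd + card ?M"
    by (meson card_Un_le le_trans add_le_mono le_refl)
  finally have c: "real (card {n\<in>{1..x}. s_practical n}) \<le> real (card ?Sm) + real (card ?Pr) + real (card ?Bd) + real (card ?M)"
    by (simp only: of_nat_add[symmetric] of_nat_le_iff)
  have Sm: "real (card ?Sm) \<le> sqrt (real x)" by (rule small_count)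
  have Pr: "real (card ?Pr) \<le> 2 * ln 4 * real x / ln (real x)"
    using prime_count[of x] assms lnx by (simp add: field_simps)
  have Bd: "real (card ?Bd) \<le> 3 * real x / real Y" using bad_count[OF assms(2)] .
  have M: "real (card ?M) \<le> real x * (EY Y * (ln (real x) powr (9/20) / sqrt (ln (real x))))"
  proof -
    have K0: "KY Y > 0" unfolding KY_def by simp
    have L: "real (card ?M) * sqrt (ln (real x) / KY Y) \<le> real x * exp ((sqrt 2 - 1) * SR x)"
      using main_count[of x Y] assms unfolding KY_def by simp
    have SRb: "SR x \<le> ln (ln (real x)) + (3 - ln (ln 2))" using SR_bound[of x] assms by simp
    have mu0: "sqrt 2 - 1 \<ge> (0::real)" by simp
    have mu1: "sqrt 2 - 1 \<le> (9/20::real)"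
    proof -
      have "sqrt 2 \<le> sqrt ((29/20::real)^2)" by (subst real_sqrt_le_iff) (simp add: power2_eq_square)
      then show ?thesis by simp
    qed
    have lnln0: "ln (ln (real x)) \<ge> 0" using lnx by simp
    have "(sqrt 2 - 1) * SR x \<le> (sqrt 2 - 1) * (ln (ln (real x)) + (3 - ln (ln 2)))"
      using SRb mu0 by (rule mult_left_mono)
    also have "\<dots> = (sqrt 2 - 1) * ln (ln (real x)) + (sqrt 2 - 1) * (3 - ln (ln 2))"
      by (simp add: algebra_simps)
    also have "(sqrt 2 - 1) * ln (ln (real x)) \<le> 9/20 * ln (ln (real x))"
      using mu1 lnln0 by (rule mult_right_mono)
    finally have ex: "exp ((sqrt 2 - 1) * SR x) \<le> exp (9/20 * ln (ln (real x)) + (sqrt 2 - 1) * (3 - ln (ln 2)))"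
      by simp
    also have "\<dots> = exp ((sqrt 2 - 1) * (3 - ln (ln 2))) * ln (real x) powr (9/20)"
      using lnx by (simp add: exp_add powr_def)
    finally have ex2: "exp ((sqrt 2 - 1) * SR x) \<le> exp ((sqrt 2 - 1) * (3 - ln (ln 2))) * ln (real x) powr (9/20)" .
    have sq: "sqrt (ln (real x) / KY Y) = sqrt (ln (real x)) / sqrt (KY Y)" by (simp add: real_sqrt_divide)
    have sqp: "sqrt (ln (real x) / KY Y) > 0" using lnx K0 by simp
    have "real (card ?M) \<le> real x * exp ((sqrt 2 - 1) * SR x) / sqrt (ln (real x) / KY Y)"
      using L sqp by (simp add: le_divide_eq)
    also have "\<dots> \<le> real x * (exp ((sqrt 2 - 1) * (3 - ln (ln 2))) * ln (real x) powr (9/20)) / sqrt (ln (real x) / KY Y)"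
      using ex2 sqp x0 by (intro divide_right_mono mult_left_mono) auto
    also have "\<dots> = real x * (EY Y * (ln (real x) powr (9/20) / sqrt (ln (real x))))"
      unfolding EY_def sq using K0 lnx by (simp add: field_simps)
    finally show ?thesis .
  qed
  have "real (card {n\<in>{1..x}. s_practical n}) \<le>
      sqrt (real x) + 2 * ln 4 * real x / ln (real x) + 3 * real x / real Y +
      real x * (EY Y * (ln (real x) powr (9/20) / sqrt (ln (real x))))"
    using c Sm Pr Bd M by linarith
  also have "\<dots> = real x * (3 / real Y + gY Y x)"
    unfolding gY_def using x0 by (simp add: field_simps)
  finally show ?thesis using x0 by (simp add: divide_le_eq mult.commute)
qed

theorem corollary6p11:
  shows "(\<lambda>x. real (card {n\<in>{1..x}. s_practical n}) / real x) \<longlonglongrightarrow> 0"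
proof (rule LIMSEQ_I)
  fix r :: real assume r: "r > 0"
  define Y where "Y = nat \<lceil>6 / r\<rceil> + 1"
  have Y1: "Y \<ge> 1" unfolding Y_def by simp
  have "real Y > 6 / r" unfolding Y_def by linarith
  then have "3 / real Y < r / 2" using r Y1 by (simp add: field_simps)
  obtain N where N: "\<forall>x\<ge>N. norm (gY Y x - 0) < r / 2"
    using LIMSEQ_D[OF gY_lim[of Y], of "r/2"] r by auto
  show "\<exists>no. \<forall>x\<ge>no. norm (real (card {n\<in>{1..x}. s_practical n}) / real x - 0) < r"
  proof (intro exI allI impI)
    fix x assume x: "x \<ge> max N 3"
    have "real (card {n\<in>{1..x}. s_practical n}) / real x \<le> 3 / real Y + gY Y x"
      using ratio_bound[of x Y] x Y1 by simp
    moreover have "gY Y x < r / 2" using N x by auto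
    moreover have "real (card {n\<in>{1..x}. s_practical n}) / real x \<ge> 0" by simp
    ultimately show "norm (real (card {n\<in>{1..x}. s_practical n}) / real x - 0) < r"
      using \<open>3 / real Y < r / 2\<close> by simp
  qed
qed

end
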